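(* Let $\mathbf{P}$ be a poset of width $w$ and let $k\ge0$. Then $|P_k|\le 2\,w^{(3w)^k}$.
   Context: The width of a poset is the maximum size of an antichain. Sets $P_k$: $L_0=\min(\mathbf{P})$, $U_0=\max(\mathbf{P})\setminus L_0$, $P_0=L_0\cup U_0$. For $i\ge1$, call $R\subseteq P_{i-1}$ admissible if $R\cap L_{i-1}$ is downward closed within $L_{i-1}$ and $R\cap U_{i-1}$ is upward closed within $U_{i-1}$; for admissible $R$ let $P_{i-1,R}=\{p\in P: \forall l\in L_{i-1}\,(l\le p\iff l\in R)\text{ and }\forall u\in U_{i-1}\,(p\le u\iff u\in R)\}$. Then $L_i=L_{i-1}\cup\bigcup_R\min(P_{i-1,R})$, $U_i=(U_{i-1}\cup\bigcup_R\max(P_{i-1,R}))\setminus L_i$ (unions over admissible $R$; $\min$ and $\max$ are taken in the induced subposet on $P_{i-1,R}$), and $P_i=L_i\cup U_i$. *)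

theory Defs
  imports Main
begin

text \<open>A poset is a carrier set P with a relation r (pairs (x,y) meaning x \<le> y)
  satisfying the library predicate partial_order_on P r.\<close>

definition antichain :: "'a set \<Rightarrow> 'a rel \<Rightarrow> 'a set \<Rightarrow> bool" where
  "antichain P r A \<longleftrightarrow> A \<subseteq> P \<and> (\<forall>x\<in>A. \<forall>y\<in>A. (x, y) \<in> r \<longrightarrow> x = y)"

definition width :: "'a set \<Rightarrow> 'a rel \<Rightarrow> nat" where
  "width P r = Max {card A | A. antichain P r A}"

definition min_set :: "'a rel \<Rightarrow> 'a set \<Rightarrow> 'a set" where
  "min_set r S = {x \<in> S. \<forall>y\<in>S. (y, x) \<in> r \<longrightarrow> y = x}"

definition max_set :: "'a rel \<Rightarrow> 'a set \<Rightarrow> 'a set" where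
  "max_set r S = {x \<in> S. \<forall>y\<in>S. (x, y) \<in> r \<longrightarrow> y = x}"

definition admissible :: "'a rel \<Rightarrow> 'a set \<Rightarrow> 'a set \<Rightarrow> 'a set \<Rightarrow> bool" where
  "admissible r L U R \<longleftrightarrow> R \<subseteq> L \<union> U
     \<and> (\<forall>x\<in>R \<inter> L. \<forall>y\<in>L. (y, x) \<in> r \<longrightarrow> y \<in> R)
     \<and> (\<forall>x\<in>R \<inter> U. \<forall>y\<in>U. (x, y) \<in> r \<longrightarrow> y \<in> R)"

definition cls :: "'a set \<Rightarrow> 'a rel \<Rightarrow> 'a set \<Rightarrow> 'a set \<Rightarrow> 'a set \<Rightarrow> 'a set" where
  "cls P r L U R = {p \<in> P. (\<forall>l\<in>L. (l, p) \<in> r \<longleftrightarrow> l \<in> R) \<and> (\<forall>u\<in>U. (p, u) \<in> r \<longleftrightarrow> u \<in> R)}"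

primrec LU :: "'a set \<Rightarrow> 'a rel \<Rightarrow> nat \<Rightarrow> 'a set \<times> 'a set" where
  "LU P r 0 = (min_set r P, max_set r P - min_set r P)"
| "LU P r (Suc i) =
     (let L = fst (LU P r i); U = snd (LU P r i);
          Adm = {R. admissible r L U R};
          L' = L \<union> (\<Union>R\<in>Adm. min_set r (cls P r L U R));
          U' = (U \<union> (\<Union>R\<in>Adm. max_set r (cls P r L U R))) - L'
      in (L', U'))"

definition Lset :: "'a set \<Rightarrow> 'a rel \<Rightarrow> nat \<Rightarrow> 'a set" where
  "Lset P r i = fst (LU P r i)"

definition Uset :: "'a set \<Rightarrow> 'a rel \<Rightarrow> nat \<Rightarrow> 'a set" where
  "Uset P r i = snd (LU P r i)"

definition Pset :: "'a set \<Rightarrow> 'a rel \<Rightarrow> nat \<Rightarrow> 'a set" where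
  "Pset P r i = Lset P r i \<union> Uset P r i"

end

theory Submission
  imports Defs "HOL-Library.FuncSet"
begin


lemma po_facts:
  assumes "partial_order_on P r"
  shows "r \<subseteq> P \<times> P" "\<And>x. x \<in> P \<Longrightarrow> (x,x) \<in> r" "trans r" "antisym r"
  using assms unfolding partial_order_on_def preorder_on_def refl_on_def by auto

lemma min_set_sub: "min_set r S \<subseteq> S" by (auto simp: min_set_def)
lemma max_set_sub: "max_set r S \<subseteq> S" by (auto simp: max_set_def)
lemma cls_sub: "cls P r L U R \<subseteq> P" by (auto simp: cls_def)

lemma LU_sub: "fst (LU P r i) \<subseteq> P \<and> snd (LU P r i) \<subseteq> P"
proof (induction i)
  case 0 then show ?case using min_set_sub[of r P] max_set_sub[of r P] by auto
next
  case (Suc i)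
  have a: "\<And>R. min_set r (cls P r (fst (LU P r i)) (snd (LU P r i)) R) \<subseteq> P"
    using min_set_sub cls_sub by (metis order_trans)
  have b: "\<And>R. max_set r (cls P r (fst (LU P r i)) (snd (LU P r i)) R) \<subseteq> P"
    using max_set_sub cls_sub by (metis order_trans)
  show ?case using Suc a b by (auto simp: Let_def)
qed

lemma LU_disj: "fst (LU P r i) \<inter> snd (LU P r i) = {}"
  by (cases i) (auto simp: Let_def)

lemma Pset_sub: "Pset P r i \<subseteq> P"
  using LU_sub[of P r i] by (auto simp: Pset_def Lset_def Uset_def)

lemma antichain_card_le:
  assumes "finite P" "antichain P r A"
  shows "card A \<le> width P r"
proof -
  have "{card A | A. antichain P r A} \<subseteq> {..card P}"
    using assms(1) by (auto simp: antichain_def intro: card_mono)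
  hence "finite {card A | A. antichain P r A}" using finite_subset by blast
  thus ?thesis unfolding width_def using assms(2) by (intro Max_ge) auto
qed

lemma min_set_antichain: "S \<subseteq> P \<Longrightarrow> antichain P r (min_set r S)"
  by (auto simp: antichain_def min_set_def)
lemma max_set_antichain: "S \<subseteq> P \<Longrightarrow> antichain P r (max_set r S)"
  by (auto simp: antichain_def max_set_def)



lemma below_max:
  assumes "finite S" "trans s" "antisym s" "\<And>x. x \<in> S \<Longrightarrow> (x,x) \<in> s" "x \<in> S"
  shows "\<exists>m\<in>max_set s S. (x,m) \<in> s"
proof -
  have "\<And>x. x \<in> S \<Longrightarrow> card {y\<in>S. (x,y)\<in>s} = n \<Longrightarrow> \<exists>m\<in>max_set s S. (x,m) \<in> s" for n
  proof (induction n rule: less_induct)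
    case (less n x)
    show ?case
    proof (cases "x \<in> max_set s S")
      case True then show ?thesis using assms(4) less.prems(1) by blast
    next
      case False
      then obtain y where y: "y \<in> S" "(x,y) \<in> s" "y \<noteq> x" using less.prems(1) by (auto simp: max_set_def)
      have sub: "{z\<in>S. (y,z)\<in>s} \<subset> {z\<in>S. (x,z)\<in>s}"
      proof
        show "{z\<in>S. (y,z)\<in>s} \<subseteq> {z\<in>S. (x,z)\<in>s}" using y assms(2) by (auto dest: transD)
        have "x \<notin> {z\<in>S. (y,z)\<in>s}" using y assms(3) by (auto dest: antisymD)
        moreover have "x \<in> {z\<in>S. (x,z)\<in>s}" using less.prems(1) assms(4) by auto
        ultimately show "{z\<in>S. (y,z)\<in>s} \<noteq> {z\<in>S. (x,z)\<in>s}" by blast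
      qed
      hence "card {z\<in>S. (y,z)\<in>s} < n" using less.prems(2) assms(1) by (metis (no_types, lifting) finite_subset psubset_card_mono subsetI mem_Collect_eq)
      then obtain m where "m\<in>max_set s S" "(y,m)\<in>s" using less.IH y(1) by blast
      then show ?thesis using y(2) assms(2) by (auto dest: transD)
    qed
  qed
  thus ?thesis using assms(5) by blast
qed

lemma downsets_le:
  assumes "finite X" "trans s" "antisym s" "\<And>x. x \<in> X \<Longrightarrow> (x,x) \<in> s"
  shows "card {D. D \<subseteq> X \<and> (\<forall>x\<in>D. \<forall>y\<in>X. (y,x)\<in>s \<longrightarrow> y\<in>D)}
       \<le> card {A. A \<subseteq> X \<and> (\<forall>x\<in>A. \<forall>y\<in>A. (x,y)\<in>s \<longrightarrow> x=y)}"
proof (rule card_inj_on_le[where f="max_set s"])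
  let ?Ds = "{D. D \<subseteq> X \<and> (\<forall>x\<in>D. \<forall>y\<in>X. (y,x)\<in>s \<longrightarrow> y\<in>D)}"
  have rep: "D = {y\<in>X. \<exists>m\<in>max_set s D. (y,m)\<in>s}" if "D \<in> ?Ds" for D
  proof
    show "D \<subseteq> {y\<in>X. \<exists>m\<in>max_set s D. (y,m)\<in>s}"
    proof
      fix y assume "y \<in> D"
      moreover have "finite D" using that assms(1) finite_subset by blast
      moreover have "\<And>x. x \<in> D \<Longrightarrow> (x,x) \<in> s" using that assms(4) by blast
      ultimately have "\<exists>m\<in>max_set s D. (y,m)\<in>s"
        using below_max[of D s y] assms(2,3) by blast
      then show "y \<in> {y\<in>X. \<exists>m\<in>max_set s D. (y,m)\<in>s}" using \<open>y \<in> D\<close> that by blast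
    qed
    show "{y\<in>X. \<exists>m\<in>max_set s D. (y,m)\<in>s} \<subseteq> D"
      using that max_set_sub[of s D] by blast
  qed
  show "inj_on (max_set s) ?Ds"
  proof (rule inj_onI)
    fix D1 D2 assume "D1 \<in> ?Ds" "D2 \<in> ?Ds" "max_set s D1 = max_set s D2"
    then show "D1 = D2" using rep[of D1] rep[of D2] by simp
  qed
  show "max_set s ` ?Ds \<subseteq> {A. A \<subseteq> X \<and> (\<forall>x\<in>A. \<forall>y\<in>A. (x,y)\<in>s \<longrightarrow> x=y)}"
    by (auto simp: max_set_def)
  show "finite {A. A \<subseteq> X \<and> (\<forall>x\<in>A. \<forall>y\<in>A. (x,y)\<in>s \<longrightarrow> x=y)}"
    using assms(1) by (rule finite_subset[rotated, OF finite_Pow_iff[THEN iffD2]]) auto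
qed

lemma small_subsets_le:
  assumes "finite X" "w \<ge> 1"
  shows "card {A. A \<subseteq> X \<and> card A \<le> w} \<le> card X ^ w + 1"
proof (cases "X = {}")
  case True
  then have "{A. A \<subseteq> X \<and> card A \<le> w} = {{}}" by auto
  then show ?thesis by simp
next
  case False
  then obtain x0 where x0: "x0 \<in> X" by blast
  have "{A. A \<subseteq> X \<and> card A \<le> w} \<subseteq> insert {} ((\<lambda>f. f ` {..<w}) ` ({..<w} \<rightarrow>\<^sub>E X))"
  proof
    fix A assume A: "A \<in> {A. A \<subseteq> X \<and> card A \<le> w}"
    show "A \<in> insert {} ((\<lambda>f. f ` {..<w}) ` ({..<w} \<rightarrow>\<^sub>E X))"
    proof (cases "A = {}")
      case True then show ?thesis by simp
    next
      case False
      have fA: "finite A" using A assms(1) finite_subset by blast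
      then obtain g where g: "bij_betw g {0..<card A} A" using ex_bij_betw_nat_finite by blast
      have cA: "card A \<ge> 1" using False fA by (simp add: Suc_leI card_gt_0_iff)
      define f where "f = (\<lambda>i. if i < w then (if i < card A then g i else g 0) else undefined)"
      have gi: "i < card A \<Longrightarrow> g i \<in> A" for i using g by (auto simp: bij_betw_def)
      have "f \<in> {..<w} \<rightarrow>\<^sub>E X" unfolding PiE_iff extensional_def using gi cA A by (auto simp: f_def)
      moreover have "f ` {..<w} = A"
      proof
        show "f ` {..<w} \<subseteq> A" using gi cA by (auto simp: f_def)
        show "A \<subseteq> f ` {..<w}"
        proof
          fix a assume "a \<in> A"
          then obtain i where "i < card A" "g i = a" using g unfolding bij_betw_def by (metis atLeastLessThan_iff imageE)
          then show "a \<in> f ` {..<w}" using A by (intro image_eqI[of _ _ i]) (auto simp: f_def)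
        qed
      qed
      ultimately show ?thesis by blast
    qed
  qed
  hence "card {A. A \<subseteq> X \<and> card A \<le> w} \<le> card (insert {} ((\<lambda>f. f ` {..<w}) ` ({..<w} \<rightarrow>\<^sub>E X)))"
    by (intro card_mono) (auto intro!: finite_PiE assms(1))
  also have "\<dots> \<le> card ((\<lambda>f. f ` {..<w}) ` ({..<w} \<rightarrow>\<^sub>E X)) + 1"
    by (simp add: card_insert_le_m1 card_insert_if)
  also have "\<dots> \<le> card ({..<w} \<rightarrow>\<^sub>E X) + 1" using card_image_le by (simp add: card_image_le finite_PiE assms(1))
  also have "card ({..<w} \<rightarrow>\<^sub>E X) = card X ^ w" by (simp add: card_PiE)
  finally show ?thesis .
qed



definition AC :: "'a rel \<Rightarrow> 'a set \<Rightarrow> 'a set set" where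
  "AC r X = {A. A \<subseteq> X \<and> (\<forall>x\<in>A. \<forall>y\<in>A. (x,y)\<in>r \<longrightarrow> x=y)}"

lemma AC_finite: "finite X \<Longrightarrow> finite (AC r X)"
  unfolding AC_def by (rule finite_subset[of _ "Pow X"]) auto

lemma AC_le_pow: "finite X \<Longrightarrow> card (AC r X) \<le> 2 ^ card X"
  unfolding AC_def card_Pow[symmetric] by (intro card_mono) auto

lemma AC_le_poly:
  assumes "finite P" "X \<subseteq> P" "w \<ge> 1" "width P r = w"
  shows "card (AC r X) \<le> card X ^ w + 1"
proof -
  have fX: "finite X" using assms finite_subset by blast
  have "AC r X \<subseteq> {A. A \<subseteq> X \<and> card A \<le> w}"
  proof
    fix A assume "A \<in> AC r X"
    hence "antichain P r A" "A \<subseteq> X" using assms(2) by (auto simp: AC_def antichain_def)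
    thus "A \<in> {A. A \<subseteq> X \<and> card A \<le> w}" using antichain_card_le[OF assms(1)] assms(4) by auto
  qed
  hence "card (AC r X) \<le> card {A. A \<subseteq> X \<and> card A \<le> w}"
    by (intro card_mono) (auto intro: finite_subset[of _ "Pow X"] fX)
  also have "\<dots> \<le> card X ^ w + 1" by (rule small_subsets_le[OF fX assms(3)])
  finally show ?thesis .
qed

lemma AC_conv: "AC (r\<inverse>) X = AC r X"
  unfolding AC_def by auto

lemma adm_D:
  assumes "admissible r L U R"
  shows "R \<subseteq> L \<union> U" "\<forall>x\<in>R \<inter> L. \<forall>y\<in>L. (y, x) \<in> r \<longrightarrow> y \<in> R"
    "\<forall>x\<in>R \<inter> U. \<forall>y\<in>U. (x, y) \<in> r \<longrightarrow> y \<in> R"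
  using assms unfolding admissible_def by blast+

lemma adm_card:
  fixes i :: nat
  assumes fin: "finite P" and po: "partial_order_on P r"
  defines "L \<equiv> fst (LU P r i)" and "U \<equiv> snd (LU P r i)"
  shows "card {R. admissible r L U R} \<le> card (AC r L) * card (AC r U)"
proof -
  have LP: "L \<subseteq> P" and UP: "U \<subseteq> P" unfolding L_def U_def using LU_sub[of P r i] by auto
  have fL: "finite L" and fU: "finite U" using LP UP fin finite_subset by blast+
  note pf = po_facts[OF po]
  let ?DL = "{D. D \<subseteq> L \<and> (\<forall>x\<in>D. \<forall>y\<in>L. (y,x)\<in>r \<longrightarrow> y\<in>D)}"
  let ?DU = "{D. D \<subseteq> U \<and> (\<forall>x\<in>D. \<forall>y\<in>U. (y,x)\<in>r\<inverse> \<longrightarrow> y\<in>D)}"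
  have "card {R. admissible r L U R} \<le> card (?DL \<times> ?DU)"
  proof (rule card_inj_on_le[where f="\<lambda>R. (R \<inter> L, R \<inter> U)"])
    show "inj_on (\<lambda>R. (R \<inter> L, R \<inter> U)) {R. admissible r L U R}"
    proof (rule inj_onI)
      fix R1 R2 assume h1: "R1 \<in> {R. admissible r L U R}" and h2: "R2 \<in> {R. admissible r L U R}"
        and eq: "(R1 \<inter> L, R1 \<inter> U) = (R2 \<inter> L, R2 \<inter> U)"
      have s1: "R1 \<subseteq> L \<union> U" using h1 by (simp add: adm_D(1))
      have s2: "R2 \<subseteq> L \<union> U" using h2 by (simp add: adm_D(1))
      have e1: "R1 \<inter> L = R2 \<inter> L" and e2: "R1 \<inter> U = R2 \<inter> U" using eq by simp_all
      have "R1 = R1 \<inter> L \<union> R1 \<inter> U" using s1 by blast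
      also have "\<dots> = R2 \<inter> L \<union> R2 \<inter> U" using e1 e2 by simp
      also have "\<dots> = R2" using s2 by blast
      finally show "R1 = R2" .
    qed
    show "(\<lambda>R. (R \<inter> L, R \<inter> U)) ` {R. admissible r L U R} \<subseteq> ?DL \<times> ?DU"
    proof (rule image_subsetI)
      fix R assume "R \<in> {R. admissible r L U R}"
      then have h: "admissible r L U R" by simp
      note a = adm_D(2)[OF h] adm_D(3)[OF h]
      have "R \<inter> L \<in> ?DL" using a(1) by blast
      moreover have "R \<inter> U \<in> ?DU"
      proof -
        have "\<forall>x\<in>R \<inter> U. \<forall>y\<in>U. (y, x) \<in> r\<inverse> \<longrightarrow> y \<in> R \<inter> U" using a(2) by blast
        thus ?thesis by blast
      qed
      ultimately show "(R \<inter> L, R \<inter> U) \<in> ?DL \<times> ?DU" by blast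
    qed
    show "finite (?DL \<times> ?DU)"
    proof (rule finite_cartesian_product)
      show "finite ?DL" by (rule finite_subset[of _ "Pow L"]) (use fL in auto)
      show "finite ?DU" by (rule finite_subset[of _ "Pow U"]) (use fU in auto)
    qed
  qed
  also have "\<dots> = card ?DL * card ?DU" by (rule card_cartesian_product)
  also have "\<dots> \<le> card (AC r L) * card (AC r U)"
  proof (rule mult_le_mono)
    have rL: "\<And>x. x \<in> L \<Longrightarrow> (x,x) \<in> r" using pf(2) LP by blast
    have rU: "\<And>x. x \<in> U \<Longrightarrow> (x,x) \<in> r\<inverse>" using pf(2) UP by blast
    show "card ?DL \<le> card (AC r L)" unfolding AC_def
      by (rule downsets_le[OF fL pf(3) pf(4) rL])
    have "card ?DU \<le> card (AC (r\<inverse>) U)" unfolding AC_def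
      by (rule downsets_le[OF fU trans_on_converse[THEN iffD2, OF pf(3)] antisym_on_converse[THEN iffD2, OF pf(4)] rU])
    thus "card ?DU \<le> card (AC r U)" by (simp add: AC_conv)
  qed
  finally show ?thesis .
qed



lemma step_card:
  fixes i :: nat
  assumes fin: "finite P" and wd: "width P r = w"
  shows "card (Pset P r (Suc i)) \<le> card (Pset P r i) + 2 * w * card {R. admissible r (fst (LU P r i)) (snd (LU P r i)) R}"
proof -
  define L where "L = fst (LU P r i)"
  define U where "U = snd (LU P r i)"
  define Adm where "Adm = {R. admissible r L U R}"
  define mn where "mn = (\<lambda>R. min_set r (cls P r L U R))"
  define mx where "mx = (\<lambda>R. max_set r (cls P r L U R))"
  have eq: "LU P r (Suc i) = (L \<union> (\<Union>R\<in>Adm. mn R), (U \<union> (\<Union>R\<in>Adm. mx R)) - (L \<union> (\<Union>R\<in>Adm. mn R)))"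
    unfolding L_def U_def Adm_def mn_def mx_def LU.simps(2) Let_def by (rule refl)
  have Pi: "Pset P r i = L \<union> U" unfolding Pset_def Lset_def Uset_def L_def U_def by (rule refl)
  have sub: "Pset P r (Suc i) \<subseteq> (L \<union> U) \<union> (\<Union>R\<in>Adm. mn R \<union> mx R)"
    unfolding Pset_def Lset_def Uset_def eq fst_conv snd_conv by blast
  have LP: "L \<subseteq> P" and UP: "U \<subseteq> P" unfolding L_def U_def using LU_sub[of P r i] by auto
  have mnP: "mn R \<subseteq> P" and mxP: "mx R \<subseteq> P" for R
  proof -
    show "mn R \<subseteq> P" unfolding mn_def using min_set_sub[of r "cls P r L U R"] cls_sub[of P r L U R] by (rule order_trans)
    show "mx R \<subseteq> P" unfolding mx_def using max_set_sub[of r "cls P r L U R"] cls_sub[of P r L U R] by (rule order_trans)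
  qed
  have finAdm: "finite Adm"
  proof (rule finite_subset[of _ "Pow (L \<union> U)"])
    show "Adm \<subseteq> Pow (L \<union> U)" proof
      fix R assume "R \<in> Adm" hence "admissible r L U R" by (simp add: Adm_def)
      thus "R \<in> Pow (L \<union> U)" using adm_D(1) by simp
    qed
    show "finite (Pow (L \<union> U))" by (simp add: finite_subset[OF _ fin] LP UP)
  qed
  have finmn: "finite (mn R)" and finmx: "finite (mx R)" for R using finite_subset[OF mnP fin] finite_subset[OF mxP fin] by simp_all
  have bnd: "card (mn R \<union> mx R) \<le> 2 * w" for R
  proof -
    have "card (mn R) \<le> w" unfolding mn_def wd[symmetric]
      by (rule antichain_card_le[OF fin min_set_antichain[OF cls_sub]])
    moreover have "card (mx R) \<le> w" unfolding mx_def wd[symmetric]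
      by (rule antichain_card_le[OF fin max_set_antichain[OF cls_sub]])
    moreover have "card (mn R \<union> mx R) \<le> card (mn R) + card (mx R)" by (rule card_Un_le)
    ultimately show ?thesis by linarith
  qed
  have "card (Pset P r (Suc i)) \<le> card ((L \<union> U) \<union> (\<Union>R\<in>Adm. mn R \<union> mx R))"
  proof (rule card_mono[OF _ sub])
    show "finite ((L \<union> U) \<union> (\<Union>R\<in>Adm. mn R \<union> mx R))"
      proof (rule finite_subset[OF _ fin])
      have "(\<Union>R\<in>Adm. mn R \<union> mx R) \<subseteq> P" by (rule UN_least) (rule Un_least[OF mnP mxP])
      thus "(L \<union> U) \<union> (\<Union>R\<in>Adm. mn R \<union> mx R) \<subseteq> P" using LP UP by (rule_tac Un_least) (rule Un_least)
    qed
  qed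
  also have "\<dots> \<le> card (L \<union> U) + card (\<Union>R\<in>Adm. mn R \<union> mx R)" by (rule card_Un_le)
  also have "card (\<Union>R\<in>Adm. mn R \<union> mx R) \<le> (\<Sum>R\<in>Adm. card (mn R \<union> mx R))"
    by (rule card_UN_le[OF finAdm])
  also have "\<dots> \<le> card Adm * (2 * w)" using sum_bounded_above[of Adm "\<lambda>R. card (mn R \<union> mx R)" "2*w"] bnd by simp
  finally show ?thesis unfolding Pi Adm_def L_def U_def by (simp add: mult.commute)
qed



lemma two_mult_le_pow2: "(n::nat) \<ge> 1 \<Longrightarrow> 2 * n \<le> 2 ^ n"
proof (induction n rule: nat_induct_at_least)
  case base then show ?case by simp
next
  case (Suc n) then show ?case by simp
qed

lemma arith1:
  fixes w :: nat assumes w2: "w \<ge> 2"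
  shows "2*w + 2*w*(2^w*2^w) \<le> 2*w^(3*w)"
proof -
  have a: "(2::nat)^w \<le> w^w" using w2 by (intro power_mono) auto
  have b: "2*w \<le> w^w" using two_mult_le_pow2[of w] w2 a by linarith
  have ww: "1 \<le> w^w * w^w" using w2 by simp
  have "2*w + 2*w*(2^w*2^w) \<le> 2*w + 2*w*(w^w*w^w)"
    using a by (intro add_left_mono mult_left_mono mult_mono) auto
  also have "\<dots> \<le> 2*w*(w^w*w^w) + 2*w*(w^w*w^w)" using ww by simp
  also have "\<dots> = 2*((2*w)*(w^w*w^w))" by simp
  also have "\<dots> \<le> 2*(w^w*(w^w*w^w))" using b by (intro mult_left_mono mult_right_mono) auto
  also have "\<dots> = 2*w^(w+(w+w))" by (simp add: power_add)
  also have "w+(w+w) = 3*w" by simp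
  finally show ?thesis .
qed

lemma arith2:
  fixes w M N :: nat assumes w2: "w \<ge> 2" and M: "M \<ge> w^(3*w)" and N: "N \<le> 2*M"
  shows "N + 2*w*(N^w+1)^2 \<le> 2*M^(3*w)"
proof -
  have M1: "M \<ge> 1" using M w2 by (metis le_trans one_le_power not_less_eq_eq numeral_le_one_iff semiring_norm(69) zero_less_numeral le_eq_less_or_eq order.strict_trans1 less_one) 
  have "w^(3*w) \<ge> 1" using w2 by simp
  define X where "X = M^w"
  have X1: "X \<ge> 1" using M1 by (simp add: X_def)
  have "N + 2*w*(N^w+1)^2 \<le> 2*M + 2*w*((2*M)^w+1)^2"
    using N by (intro add_mono mult_left_mono power_mono add_right_mono) auto
  also have "(2*M)^w = 2^w * X" by (simp add: X_def power_mult_distrib)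
  also have "((2::nat)^w * X + 1)^2 \<le> (2 * (2^w * X))^2"
  proof (rule power_mono)
    have "1 \<le> 2^w * X" using X1 by simp
    thus "2^w * X + 1 \<le> 2 * (2^w * X)" by simp
  qed simp
  also have "(2 * ((2::nat)^w * X))^2 = 4 * (2^w*2^w) * (X*X)" by (simp add: power2_eq_square)
  finally have L1: "N + 2*w*(N^w+1)^2 \<le> 2*M + 2*w*(4 * (2^w*2^w) * (X*X))" by simp
  have MX: "M \<le> X*X" proof -
    have "M = M^1" by simp
    also have "\<dots> \<le> M^(w+w)" using M1 w2 by (intro power_increasing) auto
    also have "\<dots> = X*X" by (simp add: X_def power_add)
    finally show ?thesis .
  qed
  have key: "1 + 4*w*(2^w*2^w) \<le> X"
  proof -
    have a: "(2::nat)^w \<le> w^w" using w2 by (intro power_mono) auto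
    have e: "8*w \<le> w^4"
    proof -
      have "8 \<le> w^3" using power_mono[of 2 w 3] w2 by simp
      hence "8*w \<le> w^3*w" by simp
      thus ?thesis by (simp add: power_Suc2[symmetric] numeral_eq_Suc)
    qed
    have f: "w^4 \<le> w^(4*w)" using w2 by (intro power_increasing) auto
    have "1 + 4*w*(2^w*2^w) \<le> 8*w*(2^w*2^w)" using w2 by simp
    also have "\<dots> \<le> w^(4*w) * (w^w*w^w)" using e f a by (intro mult_mono) auto
    also have "\<dots> = (w^(3*w))^2" by (simp add: power_add[symmetric] power_mult[symmetric] algebra_simps)
    also have "\<dots> \<le> M^2" using M by (intro power_mono) auto
    also have "\<dots> \<le> M^w" using M1 w2 by (intro power_increasing) auto
    finally show ?thesis by (simp add: X_def)
  qed
  have "2*M + 2*w*(4 * (2^w*2^w) * (X*X)) \<le> 2*(X*X) + 2*(4*w*(2^w*2^w))*(X*X)"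
    using MX by simp
  also have "\<dots> = 2*((1 + 4*w*(2^w*2^w))*(X*X))" by (simp add: algebra_simps)
  also have "\<dots> \<le> 2*(X*(X*X))" using key by (intro mult_left_mono mult_right_mono) auto
  also have "\<dots> = 2*M^(w+(w+w))" by (simp add: X_def power_add)
  also have "w+(w+w) = 3*w" by simp
  finally show ?thesis using L1 by linarith
qed



lemma Pset_LU: "Pset P r i = fst (LU P r i) \<union> snd (LU P r i)"
  by (simp add: Pset_def Lset_def Uset_def)

lemma P0_bounds:
  assumes fin: "finite P" and wd: "width P r = w"
  shows "card (fst (LU P r 0)) \<le> w" "card (snd (LU P r 0)) \<le> w" "card (Pset P r 0) \<le> 2*w"
proof -
  have a: "card (min_set r P) \<le> w" using antichain_card_le[OF fin min_set_antichain[of P P r]] wd by simp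
  have b: "card (max_set r P) \<le> w" using antichain_card_le[OF fin max_set_antichain[of P P r]] wd by simp
  have fm: "finite (max_set r P)" using max_set_sub[of r P] fin finite_subset by blast
  have c: "card (max_set r P - min_set r P) \<le> w" using card_mono[OF fm, of "max_set r P - min_set r P"] b by auto
  show "card (fst (LU P r 0)) \<le> w" using a by simp
  show "card (snd (LU P r 0)) \<le> w" using c by simp
  show "card (Pset P r 0) \<le> 2*w" unfolding Pset_LU
    using card_Un_le[of "fst (LU P r 0)" "snd (LU P r 0)"] a c by simp
qed

lemma adm_poly:
  fixes i :: nat
  assumes fin: "finite P" and po: "partial_order_on P r" and wd: "width P r = w" and w1: "w \<ge> 1"
  shows "card {R. admissible r (fst (LU P r i)) (snd (LU P r i)) R} \<le> (card (Pset P r i) ^ w + 1)^2"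
proof -
  define L where "L = fst (LU P r i)"
  define U where "U = snd (LU P r i)"
  define N where "N = card (Pset P r i)"
  have LP: "L \<subseteq> P" and UP: "U \<subseteq> P" unfolding L_def U_def using LU_sub[of P r i] by auto
  have fLU: "finite (L \<union> U)" using LP UP fin by (simp add: finite_subset)
  have NL: "card L \<le> N" unfolding N_def Pset_LU L_def[symmetric] U_def[symmetric]
    by (rule card_mono[OF fLU]) simp
  have NU: "card U \<le> N" unfolding N_def Pset_LU L_def[symmetric] U_def[symmetric]
    by (rule card_mono[OF fLU]) simp
  have "card {R. admissible r L U R} \<le> card (AC r L) * card (AC r U)"
    unfolding L_def U_def by (rule adm_card[OF fin po])
  also have "\<dots> \<le> (card L ^ w + 1) * (card U ^ w + 1)"
    using AC_le_poly[OF fin LP w1 wd] AC_le_poly[OF fin UP w1 wd] by (rule mult_le_mono)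
  also have "\<dots> \<le> (N ^ w + 1) * (N ^ w + 1)"
    using NL NU by (intro mult_le_mono add_right_mono power_mono) auto
  finally show ?thesis by (simp add: L_def U_def N_def power2_eq_square)
qed

lemma adm_0:
  assumes fin: "finite P" and po: "partial_order_on P r" and wd: "width P r = w"
  shows "card {R. admissible r (fst (LU P r 0)) (snd (LU P r 0)) R} \<le> 2^w * 2^w"
proof -
  define L where "L = fst (LU P r 0)"
  define U where "U = snd (LU P r 0)"
  have LP: "L \<subseteq> P" and UP: "U \<subseteq> P" unfolding L_def U_def using LU_sub[of P r 0] by auto
  have fL: "finite L" and fU: "finite U" using finite_subset[OF LP fin] finite_subset[OF UP fin] by simp_all
  have cL: "card L \<le> w" and cU: "card U \<le> w" unfolding L_def U_def using P0_bounds[OF fin wd] by auto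
  have "card {R. admissible r L U R} \<le> card (AC r L) * card (AC r U)"
    unfolding L_def U_def by (rule adm_card[OF fin po])
  also have "\<dots> \<le> 2 ^ card L * 2 ^ card U"
    using AC_le_pow[OF fL] AC_le_pow[OF fU] by (rule mult_le_mono)
  also have "\<dots> \<le> 2^w * 2^w"
    using cL cU by (intro mult_le_mono power_increasing) auto
  finally show ?thesis by (simp add: L_def U_def)
qed

lemma main_w2:
  assumes fin: "finite P" and po: "partial_order_on P r" and wd: "width P r = w" and w2: "w \<ge> 2"
  shows "card (Pset P r i) \<le> 2 * w ^ ((3 * w) ^ i)"
proof (induction i rule: less_induct)
  case (less i)
  show ?case
  proof (cases i)
    case 0 then show ?thesis using P0_bounds(3)[OF fin wd] by simp
  next
    case (Suc j)
    note st = step_card[OF fin wd, of j]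
    show ?thesis
    proof (cases j)
      case 0
      have A: "2*w*card {R. admissible r (fst (LU P r 0)) (snd (LU P r 0)) R} \<le> 2*w*(2^w*2^w)"
        by (rule mult_le_mono2[OF adm_0[OF fin po wd]])
      have "card (Pset P r (Suc 0)) \<le> 2*w + 2*w*(2^w*2^w)"
        using st P0_bounds(3)[OF fin wd] A unfolding 0 by linarith
      also have "\<dots> \<le> 2*w^(3*w)" by (rule arith1[OF w2])
      finally show ?thesis using Suc 0 by simp
    next
      case (Suc k)
      define M where "M = w ^ ((3*w)^j)"
      have IH: "card (Pset P r j) \<le> 2*M" unfolding M_def using less.IH \<open>i = Suc j\<close> by simp
      have "(3*w)^1 \<le> (3*w)^j" using Suc w2 by (intro power_increasing) auto
      hence "(3*w) \<le> (3*w)^j" by simp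
      hence Mb: "M \<ge> w^(3*w)" unfolding M_def using w2 by (intro power_increasing) auto
      have "card (Pset P r (Suc j)) \<le> card (Pset P r j) + 2*w*((card (Pset P r j))^w+1)^2"
      proof -
        have w1: "w \<ge> 1" using w2 by simp
        have "2*w*card {R. admissible r (fst (LU P r j)) (snd (LU P r j)) R} \<le> 2*w*((card (Pset P r j))^w+1)^2"
          by (rule mult_le_mono2[OF adm_poly[OF fin po wd w1]])
        thus ?thesis using st by linarith
      qed
      also have "\<dots> \<le> 2*M^(3*w)" by (rule arith2[OF w2 Mb IH])
      also have "M^(3*w) = w ^ ((3*w)^i)" unfolding M_def using \<open>i = Suc j\<close>
        by (simp add: power_mult[symmetric] power_Suc2 mult.commute)
      finally show ?thesis using \<open>i = Suc j\<close> by simp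
    qed
  qed
qed



lemma w0_empty:
  assumes fin: "finite P" and wd: "width P r = 0"
  shows "P = {}"
proof (rule ccontr)
  assume "P \<noteq> {}"
  then obtain p where p: "p \<in> P" by blast
  have "antichain P r {p}" using p by (simp add: antichain_def)
  from antichain_card_le[OF fin this] wd show False by simp
qed

lemma w1_total:
  assumes fin: "finite P" and po: "partial_order_on P r" and wd: "width P r = 1"
    and x: "x \<in> P" and y: "y \<in> P"
  shows "(x,y) \<in> r \<or> (y,x) \<in> r"
proof (rule ccontr)
  assume n: "\<not> ((x,y) \<in> r \<or> (y,x) \<in> r)"
  have xy: "x \<noteq> y" using n po_facts(2)[OF po x] by auto
  have "antichain P r {x,y}" using x y n po_facts(2)[OF po] unfolding antichain_def by auto
  from antichain_card_le[OF fin this] wd xy show False by simp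
qed

lemma w1_stable:
  assumes fin: "finite P" and po: "partial_order_on P r" and wd: "width P r = 1"
  shows "LU P r i = LU P r 0"
proof (induction i)
  case 0 show ?case by simp
next
  case (Suc i)
  define L0 where "L0 = min_set r P"
  define U0 where "U0 = max_set r P - min_set r P"
  have LU0: "LU P r 0 = (L0, U0)" by (simp add: L0_def U0_def)
  have IH: "LU P r i = (L0, U0)" using Suc.IH LU0 by (rule trans)
  have below: "(l,p) \<in> r" if "l \<in> L0" "p \<in> P" for l p
  proof -
    have lP: "l \<in> P" and lm: "\<forall>y\<in>P. (y,l) \<in> r \<longrightarrow> y = l" using that(1) by (auto simp: L0_def min_set_def)
    show ?thesis using w1_total[OF fin po wd lP that(2)] lm that(2) po_facts(2)[OF po lP] by auto
  qed
  have above: "(p,u) \<in> r" if "u \<in> U0" "p \<in> P" for u p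
  proof -
    have uP: "u \<in> P" and um: "\<forall>y\<in>P. (u,y) \<in> r \<longrightarrow> y = u" using that(1) by (auto simp: U0_def max_set_def)
    show ?thesis using w1_total[OF fin po wd uP that(2)] um that(2) po_facts(2)[OF po uP] by auto
  qed
  have cls: "cls P r L0 U0 R = {} \<or> cls P r L0 U0 R = P" for R
  proof (cases "(\<forall>l\<in>L0. l \<in> R) \<and> (\<forall>u\<in>U0. u \<in> R)")
    case True
    have "cls P r L0 U0 R = P" unfolding cls_def using True below above by auto
    thus ?thesis by simp
  next
    case False
    have "cls P r L0 U0 R = {}" unfolding cls_def using False below above by auto
    thus ?thesis by simp
  qed
  have mn: "min_set r (cls P r L0 U0 R) \<subseteq> L0" for R
    using cls[of R] by (auto simp: L0_def min_set_def)
  have mx: "max_set r (cls P r L0 U0 R) \<subseteq> max_set r P" for R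
    using cls[of R] by (auto simp: max_set_def)
  define Adm where "Adm = {R. admissible r L0 U0 R}"
  have e1: "L0 \<union> (\<Union>R\<in>Adm. min_set r (cls P r L0 U0 R)) = L0" using mn by blast
  have e2: "(U0 \<union> (\<Union>R\<in>Adm. max_set r (cls P r L0 U0 R))) - L0 = U0"
  proof
    show "(U0 \<union> (\<Union>R\<in>Adm. max_set r (cls P r L0 U0 R))) - L0 \<subseteq> U0"
      using mx unfolding U0_def L0_def by blast
    show "U0 \<subseteq> (U0 \<union> (\<Union>R\<in>Adm. max_set r (cls P r L0 U0 R))) - L0"
      unfolding U0_def L0_def by blast
  qed
  have "LU P r (Suc i) = (L0 \<union> (\<Union>R\<in>Adm. min_set r (cls P r L0 U0 R)),
     (U0 \<union> (\<Union>R\<in>Adm. max_set r (cls P r L0 U0 R))) - (L0 \<union> (\<Union>R\<in>Adm. min_set r (cls P r L0 U0 R))))"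
    unfolding LU.simps(2) IH Let_def fst_conv snd_conv Adm_def by (rule refl)
  also have "\<dots> = (L0, U0)" unfolding e1 e2 by (rule refl)
  finally have "LU P r (Suc i) = (L0, U0)" .
  then show ?case unfolding LU0 .
qed

theorem lemma3:
  fixes P :: "'a set" and r :: "'a rel" and w k :: nat
  assumes "finite P"
    and "partial_order_on P r"
    and "width P r = w"
  shows "card (Pset P r k) \<le> 2 * w ^ ((3 * w) ^ k)"
proof -
  consider "w = 0" | "w = 1" | "w \<ge> 2" by linarith
  then show ?thesis
  proof cases
    case 1
    then have "P = {}" using w0_empty assms(1,3) by blast
    then have "Pset P r k = {}" using Pset_sub[of P r k] by blast
    then show ?thesis by simp
  next
    case 2
    have "Pset P r k = Pset P r 0" unfolding Pset_LU using w1_stable[OF assms(1,2)] assms(3) 2 by simp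
    then show ?thesis using P0_bounds(3)[OF assms(1,3)] 2 by simp
  next
    case 3
    then show ?thesis using main_w2[OF assms 3] by simp
  qed
qed

end
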